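(* Let $\mathcal{C}$ be a polyhedral complex with finitely many cells, each a convex polyhedron embedded in some Euclidean space, with injective isometric attaching maps, equipped with the induced Euclidean metric on each cell. Let $P_1,F_1,P_2,F_2,\dots,F_{k-1},P_k$ be a sequence of cells of $\mathcal{C}$ with $F_i\subseteq P_i\cap P_{i+1}$ for $i=1,\dots,k-1$, and let $x\in P_1$, $y\in P_k$. Let $p_0=x$, $p_k=y$ and $p_i\in F_i^\circ$ for $1\le i\le k-1$, where $F^\circ$ denotes the relative interior of $F$. Then the path formed by the segments $[p_{i-1},p_i]\subseteq P_i$ is the shortest path from $x$ to $y$ among paths passing through this sequence of cells and faces if and only if, for $i=1,\dots,k-1$, \[\pi_{F_i}\left(\frac{p_i-p_{i-1}}{\|p_i-p_{i-1}\|}\right)=\pi_{F_i}\left(\frac{p_{i+1}-p_i}{\|p_{i+1}-p_i\|}\right),\] where $\|\cdot\|$ is the Euclidean norm and $\pi_{F_i}$ denotes orthogonal projection onto the linear subspace parallel to the affine span of $F_i$ (the vector $p_i-p_{i-1}$ being computed in the Euclidean space of $P_i$ and $p_{i+1}-p_i$ in that of $P_{i+1}$, with the projections compared via the isometric identification of $F_i$).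
   Context: A path passing through the sequence of cells and faces means a path from $x$ to $y$ consisting of segments $[q_{i-1},q_i]\subseteq P_i$ with $q_0=x$, $q_k=y$, $q_i\in F_i$ for $1\le i\le k-1$; its length is $\sum_{i=1}^k\|q_i-q_{i-1}\|$. *)

theory Defs
  imports "HOL-Analysis.Analysis"
begin

definition orth_proj :: "'a::euclidean_space set \<Rightarrow> 'a \<Rightarrow> 'a" where
  "orth_proj S v = (THE w. w \<in> S \<and> (\<forall>u\<in>S. (v - w) \<bullet> u = 0))"

definition lin_dir :: "'a::euclidean_space set \<Rightarrow> 'a set" where
  "lin_dir A = {u - v | u v. u \<in> affine hull A \<and> v \<in> affine hull A}"

text \<open>
  Cells P 1, ..., P k are given in (a common copy of) Euclidean space, each in its own
  coordinates.  The face F_i appears as A i (in the coordinates of P i) and as B i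
  (in the coordinates of P (i+1)); the isometry phi i identifies them.
  A path through the cells/faces is given by the P_i-coordinates q i of the points on F_i.
  Segment i runs from seg_start to seg_end, both in coordinates of P i.\<close>
definition seg_start :: "(nat \<Rightarrow> 'a \<Rightarrow> 'a) \<Rightarrow> 'a \<Rightarrow> (nat \<Rightarrow> 'a) \<Rightarrow> nat \<Rightarrow> 'a" where
  "seg_start \<phi> x q i = (if i = 1 then x else \<phi> (i - 1) (q (i - 1)))"

definition seg_end :: "nat \<Rightarrow> 'a \<Rightarrow> (nat \<Rightarrow> 'a) \<Rightarrow> nat \<Rightarrow> 'a" where
  "seg_end k y q i = (if i = k then y else q i)"

definition through_path ::
  "nat \<Rightarrow> (nat \<Rightarrow> 'a::euclidean_space set) \<Rightarrow> (nat \<Rightarrow> 'a set) \<Rightarrow> (nat \<Rightarrow> 'a \<Rightarrow> 'a)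
     \<Rightarrow> 'a \<Rightarrow> 'a \<Rightarrow> (nat \<Rightarrow> 'a) \<Rightarrow> bool" where
  "through_path k P A \<phi> x y q \<longleftrightarrow>
     (\<forall>i\<in>{1..<k}. q i \<in> A i) \<and>
     (\<forall>i\<in>{1..k}. closed_segment (seg_start \<phi> x q i) (seg_end k y q i) \<subseteq> P i)"

definition path_len ::
  "nat \<Rightarrow> (nat \<Rightarrow> 'a::euclidean_space \<Rightarrow> 'a) \<Rightarrow> 'a \<Rightarrow> 'a \<Rightarrow> (nat \<Rightarrow> 'a) \<Rightarrow> real" where
  "path_len k \<phi> x y q = (\<Sum>i=1..k. dist (seg_start \<phi> x q i) (seg_end k y q i))"

definition seg_dir :: "nat \<Rightarrow> (nat \<Rightarrow> 'a::euclidean_space \<Rightarrow> 'a) \<Rightarrow> 'a \<Rightarrow> 'a \<Rightarrow> (nat \<Rightarrow> 'a) \<Rightarrow> nat \<Rightarrow> 'a" where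
  "seg_dir k \<phi> x y q i =
     (1 / norm (seg_end k y q i - seg_start \<phi> x q i)) *\<^sub>R (seg_end k y q i - seg_start \<phi> x q i)"

end

theory Submission imports Defs begin

lemma orth_proj_eq:
  fixes S :: "'a::euclidean_space set"
  assumes "subspace S" "w \<in> S" "\<forall>u\<in>S. (v - w) \<bullet> u = 0"
  shows "orth_proj S v = w"
  unfolding orth_proj_def
proof (rule the_equality)
  show "w \<in> S \<and> (\<forall>u\<in>S. (v - w) \<bullet> u = 0)" using assms by blast
  fix w' assume h: "w' \<in> S \<and> (\<forall>u\<in>S. (v - w') \<bullet> u = 0)"
  have "w - w' \<in> S" using assms h subspace_diff by blast
  then have "(v - w') \<bullet> (w - w') = 0" "(v - w) \<bullet> (w - w') = 0" using assms h by auto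
  then have "(w - w') \<bullet> (w - w') = 0" by (simp add: inner_diff_left)
  thus "w' = w" by simp
qed

lemma orth_proj_props:
  fixes S :: "'a::euclidean_space set"
  assumes "subspace S"
  shows "orth_proj S v \<in> S \<and> (\<forall>u\<in>S. (v - orth_proj S v) \<bullet> u = 0)"
proof -
  obtain y z where y: "y \<in> span S" and z: "\<And>w. w \<in> span S \<Longrightarrow> orthogonal z w" and e: "v = y + z"
    using orthogonal_subspace_decomp_exists[of S v] by metis
  have sp: "span S = S" using assms by (simp add: span_eq_iff)
  have "orth_proj S v = y"
    using y z e sp assms by (intro orth_proj_eq) (auto simp: orthogonal_def)
  then show ?thesis using y z e sp by (auto simp: orthogonal_def)
qed

lemma lin_dir_eq:
  fixes A :: "'a::euclidean_space set"
  assumes "a \<in> affine hull A"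
  shows "lin_dir A = (\<lambda>x. x - a) ` (affine hull A)"
proof
  show "lin_dir A \<subseteq> (\<lambda>x. x - a) ` (affine hull A)"
  proof
    fix w assume "w \<in> lin_dir A"
    then obtain u v where uv: "w = u - v" "u \<in> affine hull A" "v \<in> affine hull A"
      unfolding lin_dir_def by blast
    have "a + 1 *\<^sub>R (u - v) \<in> affine hull A"
      using mem_affine_3_minus[OF affine_affine_hull assms uv(2,3)] .
    moreover have "w = (a + 1 *\<^sub>R (u - v)) - a" using uv by simp
    ultimately show "w \<in> (\<lambda>x. x - a) ` (affine hull A)" by blast
  qed
  show "(\<lambda>x. x - a) ` (affine hull A) \<subseteq> lin_dir A"
  proof
    fix w assume "w \<in> (\<lambda>x. x - a) ` (affine hull A)"
    then obtain z where z: "z \<in> affine hull A" "w = z - a" by blast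
    then have "\<exists>u v. w = u - v \<and> u \<in> affine hull A \<and> v \<in> affine hull A"
      using assms by blast
    then show "w \<in> lin_dir A" by (simp add: lin_dir_def)
  qed
qed

lemma lin_dir_subspace:
  fixes A :: "'a::euclidean_space set"
  assumes "a \<in> A"
  shows "subspace (lin_dir A)"
proof -
  have ah: "a \<in> affine hull A" by (rule hull_inc[OF assms])
  have "subspace ((\<lambda>x. x - a) ` (affine hull A))"
    by (rule affine_diffs_subspace_subtract[OF affine_affine_hull ah])
  then show ?thesis using lin_dir_eq[OF ah] by simp
qed

lemma lin_dir_image:
  fixes A :: "'a::euclidean_space set"
  assumes "linear L"
  shows "lin_dir ((\<lambda>u. c + L u) ` A) = L ` lin_dir A"
proof -
  have bl: "bounded_linear L" using assms linear_conv_bounded_linear by blast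
  have "(\<lambda>u. c + L u) ` A = (\<lambda>x. c + x) ` (L ` A)" by (simp add: image_image)
  then have ah: "affine hull ((\<lambda>u. c + L u) ` A) = (\<lambda>x. c + x) ` (L ` (affine hull A))"
    by (simp add: affine_hull_translation affine_hull_linear_image[OF bl])
  show ?thesis
  proof
    show "lin_dir ((\<lambda>u. c + L u) ` A) \<subseteq> L ` lin_dir A"
    proof
      fix w assume "w \<in> lin_dir ((\<lambda>u. c + L u) ` A)"
      then obtain u v where "w = (c + L u) - (c + L v)" "u \<in> affine hull A" "v \<in> affine hull A"
        unfolding lin_dir_def ah by blast
      then have "w = L (u - v)" "u - v \<in> lin_dir A" unfolding lin_dir_def
        by (auto simp: linear_diff[OF assms])
      then show "w \<in> L ` lin_dir A" by blast
    qed
    show "L ` lin_dir A \<subseteq> lin_dir ((\<lambda>u. c + L u) ` A)"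
    proof
      fix w assume "w \<in> L ` lin_dir A"
      then obtain u v where "w = L (u - v)" "u \<in> affine hull A" "v \<in> affine hull A"
        unfolding lin_dir_def by blast
      then have "w = (c + L u) - (c + L v)" "c + L u \<in> affine hull ((\<lambda>u. c + L u) ` A)"
         "c + L v \<in> affine hull ((\<lambda>u. c + L u) ` A)"
        unfolding ah by (auto simp: linear_diff[OF assms])
      then show "w \<in> lin_dir ((\<lambda>u. c + L u) ` A)" unfolding lin_dir_def by blast
    qed
  qed
qed

lemma cond_equiv:
  fixes S :: "'a::euclidean_space set"
  assumes ot: "orthogonal_transformation L" and S: "subspace S"
  shows "L (orth_proj S d1) = orth_proj (L ` S) d2 \<longleftrightarrow> (\<forall>v\<in>S. d1 \<bullet> v = d2 \<bullet> L v)"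
proof -
  have lin: "linear L" and ip: "\<And>v w. L v \<bullet> L w = v \<bullet> w"
    using ot by (auto simp: orthogonal_transformation_def)
  have LS: "subspace (L ` S)" using S lin linear_subspace_image by blast
  define w where "w = orth_proj S d1"
  have w: "w \<in> S" "\<forall>u\<in>S. (d1 - w) \<bullet> u = 0" using orth_proj_props[OF S] w_def by auto
  have key: "\<And>v. v \<in> S \<Longrightarrow> w \<bullet> v = d1 \<bullet> v" using w by (simp add: inner_diff_left)
  show ?thesis
  proof
    assume h: "L (orth_proj S d1) = orth_proj (L ` S) d2"
    have "\<forall>u\<in>L ` S. (d2 - L w) \<bullet> u = 0" using orth_proj_props[OF LS, of d2] h w_def by simp
    then show "\<forall>v\<in>S. d1 \<bullet> v = d2 \<bullet> L v"
      using key ip by (auto simp: inner_diff_left)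
  next
    assume h: "\<forall>v\<in>S. d1 \<bullet> v = d2 \<bullet> L v"
    show "L (orth_proj S d1) = orth_proj (L ` S) d2"
      unfolding w_def[symmetric]
      by (rule orth_proj_eq[OF LS, symmetric]) (use w h key ip in \<open>auto simp: inner_diff_left\<close>)
  qed
qed

lemma deriv_norm_line:
  fixes c v :: "'a::euclidean_space"
  assumes "c \<noteq> 0"
  shows "((\<lambda>t. norm (c + t *\<^sub>R v)) has_real_derivative (c \<bullet> v / norm c)) (at 0)"
proof -
  have d1: "((\<lambda>t. c + t *\<^sub>R v) has_derivative (\<lambda>t. t *\<^sub>R v)) (at 0)"
    by (auto intro!: derivative_eq_intros)
  have d2: "(norm has_derivative (\<lambda>h. h \<bullet> sgn c)) (at ((\<lambda>t. c + t *\<^sub>R v) 0))"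
    using has_derivative_norm[OF assms] by simp
  have "((\<lambda>t. norm (c + t *\<^sub>R v)) has_derivative (\<lambda>t. (t *\<^sub>R v) \<bullet> sgn c)) (at 0)"
    using has_derivative_compose[OF d1 d2] by (simp add: o_def)
  moreover have "(\<lambda>t. (t *\<^sub>R v) \<bullet> sgn c) = (*) (c \<bullet> v / norm c)"
    by (auto simp: sgn_div_norm inner_commute divide_inverse)
  ultimately show ?thesis unfolding has_field_derivative_def by metis
qed


lemma sum_if_last:
  fixes a :: "nat \<Rightarrow> real"
  assumes "1 \<le> k"
  shows "(\<Sum>i=1..k. if i = k then 0 else a i) = (\<Sum>i\<in>{1..<k}. a i)"
proof -
  have "{1..k} = insert k {1..<k}" using assms by auto
  then have "(\<Sum>i=1..k. if i = k then 0 else a i) = (\<Sum>i\<in>{1..<k}. if i = k then 0 else a i)"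
    by simp
  also have "\<dots> = (\<Sum>i\<in>{1..<k}. a i)" by (rule sum.cong) auto
  finally show ?thesis .
qed

lemma sum_if_first:
  fixes b :: "nat \<Rightarrow> real"
  assumes "1 \<le> k"
  shows "(\<Sum>i=1..k. if i = 1 then 0 else b (i - 1)) = (\<Sum>j\<in>{1..<k}. b j)"
proof -
  have "{1..k} = insert 1 {Suc 1..k}" using assms by auto
  then have "(\<Sum>i=1..k. if i = 1 then 0 else b (i - 1)) = (\<Sum>i\<in>{Suc 1..k}. if i = 1 then 0 else b (i - 1))"
    by simp
  also have "\<dots> = (\<Sum>i\<in>{Suc 1..k}. b (i - 1))" by (rule sum.cong) auto
  also have "\<dots> = (\<Sum>i\<in>Suc ` {1..<k}. b (i - 1))"
  proof -
    have "{Suc 1..k} = Suc ` {1..<k}" using assms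
      by (metis Suc_leI Suc_pred atLeastLessThanSuc_atLeastAtMost image_Suc_atLeastLessThan le_numeral_extra(2) not_one_le_zero zero_less_iff_neq_zero)
    then show ?thesis by simp
  qed
  also have "\<dots> = (\<Sum>j\<in>{1..<k}. b j)"
    by (subst sum.reindex) auto
  finally show ?thesis .
qed

lemma sum_two:
  fixes f :: "nat \<Rightarrow> real"
  assumes "finite S" "j \<in> S" "j' \<in> S" "j \<noteq> j'"
  shows "sum f S = f j + f j' + sum f (S - {j, j'})"
proof -
  have "sum f S = f j + sum f (S - {j})" by (rule sum.remove[OF assms(1,2)])
  also have "sum f (S - {j}) = f j' + sum f (S - {j} - {j'})" by (rule sum.remove) (use assms in auto)
  also have "S - {j} - {j'} = S - {j, j'}" by auto
  finally show ?thesis by simp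
qed

lemma unit_ineq:
  fixes w z :: "'a::euclidean_space"
  assumes "w \<noteq> 0"
  shows "norm z \<ge> norm w + ((1 / norm w) *\<^sub>R w) \<bullet> (z - w)"
proof -
  define d where "d = (1 / norm w) *\<^sub>R w"
  have nd: "norm d = 1" using assms by (simp add: d_def)
  have dw: "d \<bullet> w = norm w" using assms by (simp add: d_def dot_square_norm power2_eq_square)
  have "d \<bullet> z \<le> norm d * norm z" by (rule norm_cauchy_schwarz)
  then have "d \<bullet> z \<le> norm z" using nd by simp
  then show ?thesis using dw by (simp add: d_def[symmetric] inner_diff_right)
qed


theorem lemma5p1:
  fixes k :: nat and P A B :: "nat \<Rightarrow> 'a::euclidean_space set"
    and \<phi> :: "nat \<Rightarrow> 'a \<Rightarrow> 'a" and x y :: 'a and p :: "nat \<Rightarrow> 'a"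
  assumes "k \<ge> 1"
    and "\<forall>i\<in>{1..k}. polyhedron (P i)"
    and "\<forall>i\<in>{1..<k}. A i face_of P i \<and> B i face_of P (Suc i)"
    and "\<forall>i\<in>{1..<k}. (\<forall>u v. dist (\<phi> i u) (\<phi> i v) = dist u v) \<and> \<phi> i ` A i = B i"
    and "x \<in> P 1" and "y \<in> P k"
    and "\<forall>i\<in>{1..<k}. p i \<in> rel_interior (A i)"
    and "\<forall>i\<in>{1..k}. seg_start \<phi> x p i \<noteq> seg_end k y p i"
  shows "(through_path k P A \<phi> x y p \<and>
          (\<forall>q. through_path k P A \<phi> x y q \<longrightarrow> path_len k \<phi> x y p \<le> path_len k \<phi> x y q))
     \<longleftrightarrow> (\<forall>i\<in>{1..<k}.
           \<phi> i (orth_proj (lin_dir (A i)) (seg_dir k \<phi> x y p i)) - \<phi> i 0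
             = orth_proj (lin_dir (B i)) (seg_dir k \<phi> x y p (Suc i)))"
proof -
  note k1 = assms(1) and poly = assms(2) and faces = assms(3) and iso = assms(4)
    and xP = assms(5) and yP = assms(6) and pri = assms(7) and nz = assms(8)
  define L where "L i = (\<lambda>u. \<phi> i u - \<phi> i 0)" for i
  have ot: "orthogonal_transformation (L i)" if "i \<in> {1..<k}" for i
    unfolding orthogonal_transformation_isometry
    using iso that by (simp add: L_def dist_norm)
  have linL: "linear (L i)" if "i \<in> {1..<k}" for i
    using ot[OF that] by (simp add: orthogonal_transformation_def)
  have ipL: "L i v \<bullet> L i w = v \<bullet> w" if "i \<in> {1..<k}" for i v w
    using ot[OF that] by (simp add: orthogonal_transformation_def)
  have phidiff: "\<phi> i u - \<phi> i v = L i (u - v)" if "i \<in> {1..<k}" for i u v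
    using linear_diff[OF linL[OF that], of u v] by (simp add: L_def)
  have pA: "p i \<in> A i" if "i \<in> {1..<k}" for i using pri that rel_interior_subset by blast
  have subA: "subspace (lin_dir (A i))" if "i \<in> {1..<k}" for i
    using lin_dir_subspace pA[OF that] by blast
  have dirB: "lin_dir (B i) = L i ` lin_dir (A i)" if "i \<in> {1..<k}" for i
  proof -
    have e: "(\<lambda>u. \<phi> i 0 + L i u) = \<phi> i" by (simp add: L_def fun_eq_iff)
    have "B i = (\<lambda>u. \<phi> i 0 + L i u) ` A i" unfolding e using iso that by blast
    then show ?thesis using lin_dir_image[OF linL[OF that]] by simp
  qed
  define d where "d = seg_dir k \<phi> x y p"
  have COND: "(\<forall>i\<in>{1..<k}.
           \<phi> i (orth_proj (lin_dir (A i)) (seg_dir k \<phi> x y p i)) - \<phi> i 0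
             = orth_proj (lin_dir (B i)) (seg_dir k \<phi> x y p (Suc i)))
     \<longleftrightarrow> (\<forall>j\<in>{1..<k}. \<forall>v\<in>lin_dir (A j). d j \<bullet> v = d (Suc j) \<bullet> L j v)"
  proof -
    have "(\<phi> i (orth_proj (lin_dir (A i)) (seg_dir k \<phi> x y p i)) - \<phi> i 0
             = orth_proj (lin_dir (B i)) (seg_dir k \<phi> x y p (Suc i)))
         \<longleftrightarrow> (\<forall>v\<in>lin_dir (A i). d i \<bullet> v = d (Suc i) \<bullet> L i v)" if "i \<in> {1..<k}" for i
      using cond_equiv[OF ot[OF that] subA[OF that]] dirB[OF that]
      by (simp add: L_def d_def)
    then show ?thesis by auto
  qed
  have TP: "through_path k P A \<phi> x y q \<longleftrightarrow> (\<forall>i\<in>{1..<k}. q i \<in> A i)" for q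
  proof
    assume qA: "\<forall>i\<in>{1..<k}. q i \<in> A i"
    have "closed_segment (seg_start \<phi> x q i) (seg_end k y q i) \<subseteq> P i" if i: "i \<in> {1..k}" for i
    proof -
      have cv: "convex (P i)" using poly i polyhedron_imp_convex by blast
      have s: "seg_start \<phi> x q i \<in> P i"
      proof (cases "i = 1")
        case True then show ?thesis using xP by (simp add: seg_start_def)
      next
        case False
        then have i1: "i - 1 \<in> {1..<k}" and si: "Suc (i - 1) = i" using i by auto
        have "\<phi> (i - 1) (q (i - 1)) \<in> B (i - 1)" using iso qA i1 by blast
        moreover have "B (i - 1) \<subseteq> P (Suc (i - 1))" using faces i1 face_of_imp_subset by blast
        ultimately show ?thesis using False si by (auto simp: seg_start_def)
      qed
      have e: "seg_end k y q i \<in> P i"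
      proof (cases "i = k")
        case True then show ?thesis using yP by (simp add: seg_end_def)
      next
        case False
        then have i1: "i \<in> {1..<k}" using i by auto
        then show ?thesis using False qA faces face_of_imp_subset by (fastforce simp: seg_end_def)
      qed
      show ?thesis using cv s e closed_segment_subset by blast
    qed
    then show "through_path k P A \<phi> x y q" using qA by (simp add: through_path_def)
  qed (simp add: through_path_def)
  have dist_eq: "dist (seg_start \<phi> x q i) (seg_end k y q i) = norm (seg_end k y q i - seg_start \<phi> x q i)" for q i
    by (simp add: dist_norm norm_minus_commute)
  show ?thesis
    unfolding COND
  proof
    assume H: "through_path k P A \<phi> x y p \<and>
          (\<forall>q. through_path k P A \<phi> x y q \<longrightarrow> path_len k \<phi> x y p \<le> path_len k \<phi> x y q)"
    show "\<forall>j\<in>{1..<k}. \<forall>v\<in>lin_dir (A j). d j \<bullet> v = d (Suc j) \<bullet> L j v"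
    proof (intro ballI)
      fix j v assume j: "j \<in> {1..<k}" and v: "v \<in> lin_dir (A j)"
      obtain \<epsilon> where eps: "\<epsilon> > 0" "ball (p j) \<epsilon> \<inter> affine hull (A j) \<subseteq> A j"
        using pri j mem_rel_interior_ball by blast
      have jk: "j \<in> {1..k}" "Suc j \<in> {1..k}" "j \<noteq> Suc j" using j by auto
      define c1 where "c1 = seg_end k y p j - seg_start \<phi> x p j"
      define c2 where "c2 = seg_end k y p (Suc j) - seg_start \<phi> x p (Suc j)"
      have c1: "c1 \<noteq> 0" using bspec[OF nz jk(1)] by (simp add: c1_def)
      have c2: "c2 \<noteq> 0" using bspec[OF nz jk(2)] by (simp add: c2_def)
      define F where "F t = norm (c1 + t *\<^sub>R v) + norm (c2 + t *\<^sub>R (- L j v))" for t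
      define qt where "qt t = p(j := p j + t *\<^sub>R v)" for t
      define h where "h q i = dist (seg_start \<phi> x q i) (seg_end k y q i)" for q i
      have same: "h (qt t) i = h p i" if "i \<in> {1..k} - {j, Suc j}" for t i
      proof -
        have "seg_start \<phi> x (qt t) i = seg_start \<phi> x p i"
          using that by (auto simp: seg_start_def qt_def)
        moreover have "seg_end k y (qt t) i = seg_end k y p i"
          using that by (auto simp: seg_end_def qt_def)
        ultimately show ?thesis by (simp add: h_def)
      qed
      have hj: "h (qt t) j = norm (c1 + t *\<^sub>R v)" for t
      proof -
        have "seg_start \<phi> x (qt t) j = seg_start \<phi> x p j"
          using j by (auto simp: seg_start_def qt_def)
        moreover have "seg_end k y (qt t) j = p j + t *\<^sub>R v" "seg_end k y p j = p j"
          using j by (auto simp: seg_end_def qt_def)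
        ultimately show ?thesis unfolding h_def dist_eq c1_def
          by (simp add: algebra_simps)
      qed
      have hsj: "h (qt t) (Suc j) = norm (c2 + t *\<^sub>R (- L j v))" for t
      proof -
        have "seg_start \<phi> x (qt t) (Suc j) = \<phi> j (p j + t *\<^sub>R v)" "seg_start \<phi> x p (Suc j) = \<phi> j (p j)"
          using j by (auto simp: seg_start_def qt_def)
        moreover have "\<phi> j (p j + t *\<^sub>R v) = \<phi> j (p j) + t *\<^sub>R L j v"
          using phidiff[OF j, of "p j + t *\<^sub>R v" "p j"] linear_cmul[OF linL[OF j]]
          by (simp add: algebra_simps)
        moreover have "seg_end k y (qt t) (Suc j) = seg_end k y p (Suc j)"
          by (auto simp: seg_end_def qt_def)
        ultimately show ?thesis unfolding h_def dist_eq c2_def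
          by (simp add: algebra_simps)
      qed
      have plen: "path_len k \<phi> x y q = h q j + h q (Suc j) + sum (h q) ({1..k} - {j, Suc j})" for q
        unfolding path_len_def h_def[symmetric]
        using sum_two[of "{1..k}" j "Suc j" "h q"] jk by simp
      have qt0: "qt 0 = p" by (simp add: qt_def)
      have Fdiff: "path_len k \<phi> x y (qt t) - path_len k \<phi> x y p = F t - F 0" for t
      proof -
        have "sum (h (qt t)) ({1..k} - {j, Suc j}) = sum (h p) ({1..k} - {j, Suc j})"
          using same by (intro sum.cong) auto
        then show ?thesis
          using plen[of "qt t"] plen[of p] hj[of t] hsj[of t] hj[of 0] hsj[of 0]
          by (simp add: qt0 F_def)
      qed
      define \<delta> where "\<delta> = \<epsilon> / (norm v + 1)"
      have \<delta>: "\<delta> > 0" using eps unfolding \<delta>_def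
        by (intro divide_pos_pos) (auto intro: add_nonneg_pos)
      have loc: "\<forall>t. \<bar>0 - t\<bar> < \<delta> \<longrightarrow> F 0 \<le> F t"
      proof (intro allI impI)
        fix t assume t: "\<bar>0 - t\<bar> < \<delta>"
        have "norm (t *\<^sub>R v) = \<bar>t\<bar> * norm v" by simp
        also have "\<dots> \<le> \<bar>t\<bar> * (norm v + 1)" by (simp add: mult_left_mono)
        also have "\<dots> < \<epsilon>"
        proof -
          have pos: "0 < norm v + 1" using norm_ge_zero[of v] by linarith
          show ?thesis using t pos_less_divide_eq[OF pos, of "\<bar>t\<bar>" \<epsilon>] by (simp add: \<delta>_def)
        qed
        finally have n: "norm (t *\<^sub>R v) < \<epsilon>" .
        have ah: "p j \<in> affine hull (A j)" by (rule hull_inc[OF pA[OF j]])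
        have "t *\<^sub>R v \<in> lin_dir (A j)" by (rule subspace_scale[OF subA[OF j] v])
        then have "t *\<^sub>R v \<in> (\<lambda>x. x - p j) ` (affine hull (A j))"
          by (simp only: lin_dir_eq[OF ah])
        then obtain z where z: "z \<in> affine hull (A j)" "t *\<^sub>R v = z - p j"
          by blast
        have "p j + t *\<^sub>R v \<in> affine hull (A j)" using z by simp
        moreover have "p j + t *\<^sub>R v \<in> ball (p j) \<epsilon>" using n by (simp add: dist_norm)
        ultimately have "p j + t *\<^sub>R v \<in> A j" using eps by blast
        then have "\<forall>i\<in>{1..<k}. qt t i \<in> A i" using pA by (auto simp: qt_def)
        then have "path_len k \<phi> x y p \<le> path_len k \<phi> x y (qt t)" using H TP by blast
        then show "F 0 \<le> F t" using Fdiff[of t] by simp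
      qed
      have D: "(F has_real_derivative (c1 \<bullet> v / norm c1 + c2 \<bullet> (- L j v) / norm c2)) (at 0)"
        unfolding F_def[abs_def]
        by (intro DERIV_add deriv_norm_line c1 c2)
      have "c1 \<bullet> v / norm c1 + c2 \<bullet> (- L j v) / norm c2 = 0"
        using DERIV_local_min[OF D \<delta> loc] .
      moreover have "d j = (1 / norm c1) *\<^sub>R c1" "d (Suc j) = (1 / norm c2) *\<^sub>R c2"
        by (simp_all add: d_def seg_dir_def c1_def c2_def)
      ultimately show "d j \<bullet> v = d (Suc j) \<bullet> L j v"
        by (simp add: divide_inverse algebra_simps)
    qed
  next
    assume Hc: "\<forall>j\<in>{1..<k}. \<forall>v\<in>lin_dir (A j). d j \<bullet> v = d (Suc j) \<bullet> L j v"
    have "through_path k P A \<phi> x y p" using TP pA by blast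
    moreover have "path_len k \<phi> x y p \<le> path_len k \<phi> x y q" if tq: "through_path k P A \<phi> x y q" for q
    proof -
      have qA: "\<forall>i\<in>{1..<k}. q i \<in> A i" using tq TP by blast
      define a where "a j = d j \<bullet> (q j - p j)" for j
      define b where "b j = d (Suc j) \<bullet> L j (q j - p j)" for j
      have ab: "a j = b j" if "j \<in> {1..<k}" for j
      proof -
        have "q j \<in> affine hull (A j)" "p j \<in> affine hull (A j)"
          using qA pA that by (auto intro: hull_inc)
        then have "q j - p j \<in> lin_dir (A j)" by (auto simp: lin_dir_def)
        then show ?thesis using Hc that by (simp add: a_def b_def)
      qed
      have step: "norm (seg_end k y q i - seg_start \<phi> x q i) \<ge>
          norm (seg_end k y p i - seg_start \<phi> x p i)
          + ((if i = k then 0 else a i) - (if i = 1 then 0 else b (i - 1)))" if i: "i \<in> {1..k}" for i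
      proof -
        define w where "w = seg_end k y p i - seg_start \<phi> x p i"
        have w: "w \<noteq> 0" using bspec[OF nz i] by (simp add: w_def)
        have dI: "d i = (1 / norm w) *\<^sub>R w" by (simp add: d_def seg_dir_def w_def)
        have E: "d i \<bullet> (seg_end k y q i - seg_end k y p i) = (if i = k then 0 else a i)"
          by (simp add: seg_end_def a_def)
        have S: "d i \<bullet> (seg_start \<phi> x q i - seg_start \<phi> x p i) = (if i = 1 then 0 else b (i - 1))"
        proof (cases "i = 1")
          case True then show ?thesis by (simp add: seg_start_def)
        next
          case False
          then have i1: "i - 1 \<in> {1..<k}" and si: "Suc (i - 1) = i" using i by auto
          show ?thesis using False phidiff[OF i1] si by (simp add: seg_start_def b_def)
        qed
        have "seg_end k y q i - seg_start \<phi> x q i - w =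
          (seg_end k y q i - seg_end k y p i) - (seg_start \<phi> x q i - seg_start \<phi> x p i)"
          by (simp add: w_def algebra_simps)
        then have "d i \<bullet> (seg_end k y q i - seg_start \<phi> x q i - w) =
            d i \<bullet> (seg_end k y q i - seg_end k y p i) - d i \<bullet> (seg_start \<phi> x q i - seg_start \<phi> x p i)"
          by (simp only: inner_diff_right)
        then have "d i \<bullet> (seg_end k y q i - seg_start \<phi> x q i - w) =
            (if i = k then 0 else a i) - (if i = 1 then 0 else b (i - 1))"
          by (simp only: E S)
        moreover have "norm w + d i \<bullet> (seg_end k y q i - seg_start \<phi> x q i - w)
            \<le> norm (seg_end k y q i - seg_start \<phi> x q i)"
          unfolding dI by (rule unit_ineq[OF w])
        ultimately show ?thesis unfolding w_def by linarith
      qed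
      have "path_len k \<phi> x y p + ((\<Sum>i=1..k. if i = k then 0 else a i) - (\<Sum>i=1..k. if i = 1 then 0 else b (i - 1)))
            = (\<Sum>i=1..k. norm (seg_end k y p i - seg_start \<phi> x p i)
               + ((if i = k then 0 else a i) - (if i = 1 then 0 else b (i - 1))))"
        unfolding path_len_def dist_eq by (simp add: sum.distrib sum_subtractf)
      also have "\<dots> \<le> (\<Sum>i=1..k. norm (seg_end k y q i - seg_start \<phi> x q i))"
        by (rule sum_mono) (rule step)
      also have "\<dots> = path_len k \<phi> x y q" unfolding path_len_def dist_eq ..
      finally have "path_len k \<phi> x y p + ((\<Sum>j\<in>{1..<k}. a j) - (\<Sum>j\<in>{1..<k}. b j)) \<le> path_len k \<phi> x y q"
        using sum_if_last[OF k1, of a] sum_if_first[OF k1, of b] by simp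
      moreover have "(\<Sum>j\<in>{1..<k}. a j) = (\<Sum>j\<in>{1..<k}. b j)" using ab by (rule sum.cong[OF refl])
      ultimately show ?thesis by simp
    qed
    ultimately show "through_path k P A \<phi> x y p \<and>
          (\<forall>q. through_path k P A \<phi> x y q \<longrightarrow> path_len k \<phi> x y p \<le> path_len k \<phi> x y q)" by blast
  qed
qed

end
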